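(* Let $r\ge3$, $n>r$, $c\ge1$, $\lambda\in\Lambda(n,r)$ (regarded as $n$-periodic) and $1\le i\le n$. In $T$: (i) If $\lambda_i=0$, there is a nonzero $z\in\mathbb{Z}[v,v^{-1}]$ such that $F_i^cE_i^c1_\lambda=z1_\lambda$ if $\lambda_{i+1}\ge c$, and $F_i^cE_i^c1_\lambda=0$ otherwise; moreover, if $c=\lambda_{i+1}=1$ then $z=1$. (ii) If $\lambda_{i+1}=0$, there is a nonzero $z'\in\mathbb{Z}[v,v^{-1}]$ such that $E_i^cF_i^c1_\lambda=z'1_\lambda$ if $\lambda_i\ge c$, and $E_i^cF_i^c1_\lambda=0$ otherwise; moreover, if $c=\lambda_i=1$ then $z'=1$.
   Context: $T$ is the $\mathbb{Q}(v)$-algebra with generators $E_i,F_i,K_i^{\pm1}$ ($1\le i\le n$, indices mod $n$) and relations: $K_iK_j=K_jK_i$; $K_iK_i^{-1}=K_i^{-1}K_i=1$; $K_iE_j=v^{\epsilon^+(i,j)}E_jK_i$; $K_iF_j=v^{-\epsilon^+(i,j)}F_jK_i$ ($\epsilon^+(i,j)=1$ if $j=i$, $-1$ if $j\equiv i-1\pmod n$, $0$ otherwise); $E_iF_j-F_jE_i=\delta_{ij}\frac{K_iK_{i+1}^{-1}-K_i^{-1}K_{i+1}}{v-v^{-1}}$; $E_iE_j=E_jE_i$, $F_iF_j=F_jF_i$ if $i-j\not\equiv\pm1$; $E_i^2E_j-(v+v^{-1})E_iE_jE_i+E_jE_i^2=0$, $F_i^2F_j-(v+v^{-1})F_iF_jF_i+F_jF_i^2=0$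 if $i-j\equiv\pm1\pmod n$; $K_1\cdots K_n=v^r$; $\prod_{j=0}^r(K_i-v^j)=0$. $\Lambda(n,r)$: compositions of $r$ into $n$ nonnegative parts, extended $n$-periodically. $1_\lambda=\prod_{i=1}^n\prod_{s=1}^{\lambda_i}\frac{K_iv^{-s+1}-K_i^{-1}v^{s-1}}{v^s-v^{-s}}$. *)

theory Defs
  imports Main "HOL-Computational_Algebra.Polynomial" "HOL-Computational_Algebra.Fraction_Field"
begin

type_synonym qv = "rat poly fract"

definition vv :: qv where "vv = Fract [:0, 1:] 1"

definition vp :: "int \<Rightarrow> qv" where "vp k = vv powi k"

text \<open>Z[v,v^-1] inside Q(v).\<close>
definition laurent_int :: "qv set" where
  "laurent_int = {z. \<exists>(p::int poly) (k::nat). z = Fract (map_poly of_int p) ([:0, 1:] ^ k)}"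

text \<open>Indices mod n, represented in {1..n}.\<close>
definition per :: "nat \<Rightarrow> int \<Rightarrow> int" where "per n i = (i - 1) mod int n + 1"

definition eps_plus :: "nat \<Rightarrow> int \<Rightarrow> int \<Rightarrow> int" where
  "eps_plus n i j = (if per n j = per n i then 1 else if per n j = per n (i - 1) then -1 else 0)"

definition adjacent :: "nat \<Rightarrow> int \<Rightarrow> int \<Rightarrow> bool" where
  "adjacent n i j \<longleftrightarrow> (i - j) mod int n = 1 \<or> (i - j) mod int n = (int n - 1) mod int n"

definition qv_algebra :: "(qv \<Rightarrow> 'a::ring_1) \<Rightarrow> bool" where
  "qv_algebra phi \<longleftrightarrow> phi 1 = 1 \<and> (\<forall>x y. phi (x + y) = phi x + phi y) \<and>
     (\<forall>x y. phi (x * y) = phi x * phi y) \<and> (\<forall>x a. phi x * a = a * phi x)"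

text \<open>Elements E, F, K, Ki (= K^-1) of a Q(v)-algebra satisfying all relations of T.
  Since T is the universal such algebra, identities in T are exactly the identities
  holding for every such family.\<close>
definition T_rel :: "nat \<Rightarrow> nat \<Rightarrow> (qv \<Rightarrow> 'a::ring_1) \<Rightarrow> (int \<Rightarrow> 'a) \<Rightarrow> (int \<Rightarrow> 'a)
    \<Rightarrow> (int \<Rightarrow> 'a) \<Rightarrow> (int \<Rightarrow> 'a) \<Rightarrow> bool" where
  "T_rel n r phi E F K Ki \<longleftrightarrow> qv_algebra phi \<and>
   (\<forall>i. E (per n i) = E i \<and> F (per n i) = F i \<and> K (per n i) = K i \<and> Ki (per n i) = Ki i) \<and>
   (\<forall>i\<in>{1..int n}. \<forall>j\<in>{1..int n}.
      K i * K j = K j * K i \<and>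
      K i * Ki i = 1 \<and> Ki i * K i = 1 \<and>
      K i * E j = phi (vp (eps_plus n i j)) * E j * K i \<and>
      K i * F j = phi (vp (- eps_plus n i j)) * F j * K i \<and>
      E i * F j - F j * E i =
        (if i = j then phi (inverse (vv - inverse vv)) *
           (K i * Ki (i + 1) - Ki i * K (i + 1)) else 0) \<and>
      (\<not> adjacent n i j \<longrightarrow> E i * E j = E j * E i \<and> F i * F j = F j * F i) \<and>
      (adjacent n i j \<longrightarrow>
         E i * E i * E j - phi (vv + inverse vv) * E i * E j * E i + E j * E i * E i = 0 \<and>
         F i * F i * F j - phi (vv + inverse vv) * F i * F j * F i + F j * F i * F i = 0)) \<and>
   prod_list (map K [1..int n]) = phi (vv ^ r) \<and>
   (\<forall>i\<in>{1..int n}. prod_list (map (\<lambda>j. K i - phi (vv ^ j)) [0..<r + 1]) = 0)"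

definition Lambda :: "nat \<Rightarrow> nat \<Rightarrow> (int \<Rightarrow> nat) set" where
  "Lambda n r = {lam. (\<forall>i. lam (i + int n) = lam i) \<and> (\<Sum>i\<in>{1..int n}. lam i) = r}"

definition one_lam :: "nat \<Rightarrow> (qv \<Rightarrow> 'a::ring_1) \<Rightarrow> (int \<Rightarrow> 'a) \<Rightarrow> (int \<Rightarrow> 'a)
    \<Rightarrow> (int \<Rightarrow> nat) \<Rightarrow> 'a" where
  "one_lam n phi K Ki lam =
     prod_list (map (\<lambda>i. prod_list (map (\<lambda>s.
        (K i * phi (vp (- int s + 1)) - Ki i * phi (vp (int s - 1))) *
        phi (inverse (vp (int s) - vp (- int s)))) [1..<lam i + 1])) [1..int n])"

end

theory Submission
  imports Defs
begin

definition commute :: "'a::ring_1 \<Rightarrow> 'a \<Rightarrow> bool" where "commute x y \<longleftrightarrow> x * y = y * x"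

lemma commute_sym: "commute x y \<Longrightarrow> commute y x" by (simp add: commute_def)
lemma commute_refl[simp]: "commute x x" by (simp add: commute_def)
lemma commute_mult[intro]: "commute x y \<Longrightarrow> commute x z \<Longrightarrow> commute x (y * z)"
  unfolding commute_def by (metis mult.assoc)
lemma commute_mult_left[intro]: "commute y x \<Longrightarrow> commute z x \<Longrightarrow> commute (y * z) x"
  unfolding commute_def by (metis mult.assoc)
lemma commute_add[intro]: "commute x y \<Longrightarrow> commute x z \<Longrightarrow> commute x (y + z)"
  unfolding commute_def by (simp add: algebra_simps)
lemma commute_add_left[intro]: "commute y x \<Longrightarrow> commute z x \<Longrightarrow> commute (y + z) x"
  unfolding commute_def by (simp add: algebra_simps)
lemma commute_diff[intro]: "commute x y \<Longrightarrow> commute x z \<Longrightarrow> commute x (y - z)"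
  unfolding commute_def by (simp add: algebra_simps)
lemma commute_diff_left[intro]: "commute y x \<Longrightarrow> commute z x \<Longrightarrow> commute (y - z) x"
  unfolding commute_def by (simp add: algebra_simps)
lemma commute_one[simp]: "commute x 1" "commute 1 x" by (simp_all add: commute_def)
lemma commute_zero[simp]: "commute x 0" "commute 0 x" by (simp_all add: commute_def)
lemma commute_power[intro]: "commute x y \<Longrightarrow> commute x (y ^ k)"
  by (induct k) auto
lemma commute_power_left[intro]: "commute y x \<Longrightarrow> commute (y ^ k) x"
  by (induct k) auto
lemma commute_prod_list[intro]: "(\<And>z. z \<in> set zs \<Longrightarrow> commute x z) \<Longrightarrow> commute x (prod_list zs)"
  by (induct zs) auto
lemma commute_prod_list_left[intro]: "(\<And>z. z \<in> set zs \<Longrightarrow> commute z x) \<Longrightarrow> commute (prod_list zs) x"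
  by (induct zs) auto

lemma prod_list_zero_right:
  assumes "\<And>z. z \<in> set zs \<Longrightarrow> commute x z" "b \<in> set zs" "b * x = 0"
  shows "prod_list zs * x = 0"
  using assms
proof (induct zs)
  case Nil then show ?case by simp
next
  case (Cons a zs)
  show ?case
  proof (cases "a = b")
    case True
    have "prod_list zs * x = x * prod_list zs"
      using Cons.prems(1) by (metis commute_def commute_prod_list list.set_intros(2))
    then have "prod_list (a # zs) * x = (a * x) * prod_list zs" by (simp add: mult.assoc)
    then show ?thesis using True Cons.prems by simp
  next
    case False
    then have "prod_list zs * x = 0" using Cons by auto
    then show ?thesis by (simp add: mult.assoc)
  qed
qed

locale qalg =
  fixes phi :: "qv \<Rightarrow> 'a::ring_1"
  assumes qa: "qv_algebra phi"
begin

lemma phi_1[simp]: "phi 1 = 1" using qa unfolding qv_algebra_def by blast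
lemma phi_add[simp]: "phi (x + y) = phi x + phi y" using qa unfolding qv_algebra_def by blast
lemma phi_mult[simp]: "phi (x * y) = phi x * phi y" using qa unfolding qv_algebra_def by blast
lemma phi_central: "phi x * a = a * phi x" using qa unfolding qv_algebra_def by blast
lemma phi_0[simp]: "phi 0 = 0"
  using phi_add[of 0 0] by simp
lemma phi_uminus[simp]: "phi (- x) = - phi x"
  using phi_add[of x "-x"] by (simp add: eq_neg_iff_add_eq_0 add.commute)
lemma phi_diff[simp]: "phi (x - y) = phi x - phi y"
  using phi_add[of x "-y"] by simp
lemma commute_phi[simp]: "commute (phi x) a" "commute a (phi x)"
  by (simp_all add: commute_def phi_central)
lemma phi_power: "phi (x ^ k) = phi x ^ k" by (induct k) auto
lemma phi_inv: "x \<noteq> 0 \<Longrightarrow> phi (inverse x) * phi x = 1"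
  by (metis phi_1 phi_mult left_inverse)
lemma phi_kill: "x \<noteq> 0 \<Longrightarrow> phi x * y = 0 \<Longrightarrow> y = 0"
  by (metis phi_inv mult.assoc mult_1 mult_zero_right)
lemma phi_comm: "phi x * phi y = phi y * phi x" by (rule phi_central)
lemma phi_left_commute: "a * (phi x * b) = phi x * (a * b)"
  by (metis mult.assoc phi_central)

definition ev :: "'a \<Rightarrow> qv poly \<Rightarrow> 'a" where
  "ev u p = fold_coeffs (\<lambda>a acc. phi a + u * acc) p 0"

lemma ev_0[simp]: "ev u 0 = 0" by (simp add: ev_def)
lemma ev_pCons[simp]: "ev u (pCons a p) = phi a + u * ev u p"
  by (cases "a = 0 \<and> p = 0") (auto simp: ev_def)
lemma ev_const[simp]: "ev u [:a:] = phi a" by simp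
lemma ev_1[simp]: "ev u 1 = 1" by (simp add: one_pCons)
lemma ev_add[simp]: "ev u (p + q) = ev u p + ev u q"
proof (induct p arbitrary: q)
  case 0 then show ?case by simp
next
  case (pCons a p)
  then show ?case by (cases q) (simp add: algebra_simps)
qed
lemma ev_uminus[simp]: "ev u (- p) = - ev u p"
  by (metis add_eq_0_iff ev_0 ev_add neg_eq_iff_add_eq_0)
lemma ev_diff[simp]: "ev u (p - q) = ev u p - ev u q"
  by (metis diff_conv_add_uminus ev_add ev_uminus)
lemma ev_smult[simp]: "ev u (smult a p) = phi a * ev u p"
  by (induct p) (auto simp: algebra_simps phi_left_commute phi_comm)
lemma ev_mult[simp]: "ev u (p * q) = ev u p * ev u q"
  by (induct p) (auto simp: algebra_simps)
lemma ev_X[simp]: "ev u [:a, b:] = phi a + u * phi b" by simp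
lemma ev_prod_list: "ev u (prod_list ps) = prod_list (map (ev u) ps)"
  by (induct ps) auto
lemma commute_ev[intro]: "commute u w \<Longrightarrow> commute (ev u p) w"
  by (induct p) auto
lemma commute_ev2[intro]: "commute u w \<Longrightarrow> commute w (ev u p)"
  using commute_ev commute_sym by blast
lemma commute_ev_ev[intro]: "commute u w \<Longrightarrow> commute (ev u p) (ev w q)"
  by (intro commute_ev commute_ev2)
lemma ev_phi: "ev (phi c) p = phi (poly p c)"
  by (induct p) auto

end

lemma vv_pow: "vv ^ a = Fract ([:0,1:] ^ a) 1"
  apply (induct a)
   apply (simp add: vv_def One_fract_def)
  apply (simp add: vv_def)
  done

lemma vv_nz[simp]: "vv \<noteq> 0"
  unfolding vv_def Zero_fract_def by (subst eq_fract(1)) auto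

lemma vv_pow_inj: "vv ^ a = vv ^ b \<longleftrightarrow> a = b"
proof
  assume "vv ^ a = vv ^ b"
  then have "([:0,1:] ^ a :: rat poly) = [:0,1:] ^ b" unfolding vv_pow by (subst (asm) eq_fract(1)) auto
  then have "degree ([:0,1:] ^ a :: rat poly) = degree ([:0,1:] ^ b :: rat poly)" by simp
  then show "a = b" using degree_linear_power[of "0::rat"] by simp
qed simp

definition Pp :: "nat set \<Rightarrow> qv poly" where "Pp S = (\<Prod>b\<in>S. [:-(vv^b), 1:])"

lemma Pp_insert: "finite S \<Longrightarrow> a \<notin> S \<Longrightarrow> Pp (insert a S) = [:-(vv^a), 1:] * Pp S"
  by (simp add: Pp_def)

lemma Pp_subset: "finite S' \<Longrightarrow> S \<subseteq> S' \<Longrightarrow> Pp S' = Pp (S' - S) * Pp S"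
  unfolding Pp_def by (metis prod.subset_diff)

lemma poly_Pp: "poly (Pp S) c = (\<Prod>b\<in>S. c - vv ^ b)"
  by (simp add: Pp_def poly_prod)

lemma poly_Pp_nz: "finite S \<Longrightarrow> a \<notin> S \<Longrightarrow> poly (Pp S) (vv ^ a) \<noteq> 0"
  by (auto simp: poly_Pp vv_pow_inj)

context qalg begin

definition supp_in :: "'a \<Rightarrow> 'a \<Rightarrow> nat set \<Rightarrow> bool" where
  "supp_in u x S \<longleftrightarrow> finite S \<and> ev u (Pp S) * x = 0"

lemma supp_mono: "supp_in u x S \<Longrightarrow> finite S' \<Longrightarrow> S \<subseteq> S' \<Longrightarrow> supp_in u x S'"
  unfolding supp_in_def by (simp add: Pp_subset mult.assoc)

lemma supp_empty: "supp_in u x {} \<Longrightarrow> x = 0"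
  by (simp add: supp_in_def Pp_def)

lemma supp_single: "supp_in u x {a} \<longleftrightarrow> u * x = phi (vv ^ a) * x"
  by (simp add: supp_in_def Pp_def algebra_simps)

lemma supp_add: "supp_in u x S \<Longrightarrow> supp_in u x' S \<Longrightarrow> supp_in u (x + x') S"
  by (simp add: supp_in_def distrib_left)

lemma supp_comm: "supp_in u x S \<Longrightarrow> commute u w \<Longrightarrow> supp_in u (w * x) S"
  unfolding supp_in_def
  by (metis commute_def commute_ev mult.assoc mult_zero_right)

lemma supp_split:
  assumes "supp_in u x (insert a S)" "a \<notin> S" "finite S"
  shows "\<exists>q1 q2. x = ev u q1 * x + ev u q2 * x \<and> supp_in u (ev u q1 * x) {a} \<and> supp_in u (ev u q2 * x) S"
proof -
  define c where "c = poly (Pp S) (vv ^ a)"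
  have c: "c \<noteq> 0" unfolding c_def using assms(2,3) by (rule poly_Pp_nz[rotated])
  define h where "h = synthetic_div (Pp S) (vv ^ a)"
  have hc: "[:-(vv^a), 1:] * h + [:c:] = Pp S" unfolding h_def c_def by (rule synthetic_div_correct')
  define q1 where "q1 = smult (inverse c) (Pp S)"
  define q2 where "q2 = - smult (inverse c) ([:-(vv^a), 1:] * h)"
  have "q1 + q2 = smult (inverse c) (Pp S - [:-(vv^a), 1:] * h)"
    unfolding q1_def q2_def by (simp add: smult_diff_right)
  also have "Pp S - [:-(vv^a), 1:] * h = [:c:]" using hc by (metis add_diff_cancel_left')
  also have "smult (inverse c) [:c:] = 1" using c by (simp add: one_pCons)
  finally have s: "q1 + q2 = 1" .
  have PI: "Pp (insert a S) = [:-(vv^a), 1:] * Pp S" using assms by (simp add: Pp_insert)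
  have P1: "Pp {a} = [:-(vv^a), 1:]" by (simp add: Pp_def)
  have z: "ev u (Pp (insert a S)) * x = 0" using assms(1) by (simp add: supp_in_def)
  have "x = ev u (q1 + q2) * x" using s by simp
  then have 1: "x = ev u q1 * x + ev u q2 * x" by (simp add: distrib_right)
  have "ev u (Pp {a}) * (ev u q1 * x) = ev u (Pp {a} * q1) * x" by (simp add: mult.assoc)
  also have "Pp {a} * q1 = smult (inverse c) (Pp (insert a S))" by (simp only: PI P1 q1_def mult_smult_right)
  also have "ev u (smult (inverse c) (Pp (insert a S))) * x = phi (inverse c) * (ev u (Pp (insert a S)) * x)"
    by (simp add: mult.assoc)
  also have "\<dots> = 0" by (simp only: z mult_zero_right)
  finally have 2: "supp_in u (ev u q1 * x) {a}" by (simp add: supp_in_def)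
  have "ev u (Pp S) * (ev u q2 * x) = ev u (Pp S * q2) * x" by (simp add: mult.assoc)
  also have "Pp S * q2 = - smult (inverse c) (h * Pp (insert a S))"
    by (simp only: PI q2_def mult_smult_right mult_minus_right mult.commute mult.left_commute)
  also have "ev u (- smult (inverse c) (h * Pp (insert a S))) * x = - (phi (inverse c) * (ev u h * (ev u (Pp (insert a S)) * x)))"
    by (simp add: mult.assoc)
  also have "\<dots> = 0" by (simp only: z mult_zero_right minus_zero)
  finally have 3: "supp_in u (ev u q2 * x) S" using assms by (simp add: supp_in_def)
  show ?thesis using 1 2 3 by blast
qed

lemma ev_shift:
  assumes "commute A B" "A * x = phi (vv ^ a) * x"
  shows "ev (A * B) p * x = ev B (pcompose p [:0, vv ^ a:]) * x"
proof (induct p)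
  case 0 then show ?case by simp
next
  case (pCons c p)
  let ?p' = "pcompose p [:0, vv ^ a:]"
  have cAB: "A * (B * ev B ?p') = (B * ev B ?p') * A"
    using assms(1) by (metis commute_def commute_ev2 commute_mult)
  have "ev (A * B) (pCons c p) * x = phi c * x + A * B * (ev (A * B) p * x)"
    by (simp add: algebra_simps)
  also have "\<dots> = phi c * x + A * (B * ev B ?p') * x" using pCons by (simp add: mult.assoc)
  also have "\<dots> = phi c * x + B * ev B ?p' * (A * x)" using cAB by (simp add: mult.assoc)
  also have "\<dots> = phi c * x + phi (vv ^ a) * (B * ev B ?p') * x"
    using assms(2) by (simp add: mult.assoc phi_left_commute)
  also have "\<dots> = ev B (pcompose (pCons c p) [:0, vv ^ a:]) * x"
    by (simp add: pcompose_pCons algebra_simps phi_left_commute)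
  finally show ?case .
qed

lemma Pp_shift: "finite S \<Longrightarrow> pcompose (Pp ((+) a ` S)) [:0, vv ^ a:] = smult ((vv ^ a) ^ card S) (Pp S)"
proof (induct S rule: finite_induct)
  case empty then show ?case by (simp add: Pp_def one_pCons)
next
  case (insert b S)
  have "(+) a ` insert b S = insert (a + b) ((+) a ` S)" by simp
  moreover have "a + b \<notin> (+) a ` S" using insert by auto
  ultimately have "Pp ((+) a ` insert b S) = [:-(vv^(a+b)), 1:] * Pp ((+) a ` S)"
    using insert by (simp add: Pp_insert)
  have lin: "pcompose [:-(vv^(a+b)), 1:] [:0, vv ^ a:] = smult (vv ^ a) [:-(vv^b), 1:]"
    by (simp add: pcompose_pCons power_add one_pCons)
  have "pcompose (Pp ((+) a ` insert b S)) [:0, vv ^ a:] =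
     smult (vv ^ a) [:-(vv^b), 1:] * smult ((vv ^ a) ^ card S) (Pp S)"
    by (simp only: \<open>Pp ((+) a ` insert b S) = _\<close> pcompose_mult lin insert(3))
  also have "\<dots> = smult ((vv ^ a) ^ card (insert b S)) (Pp (insert b S))"
    by (simp only: mult_smult_left mult_smult_right smult_smult Pp_insert[OF insert(1,2)]
        card_insert_disjoint[OF insert(1,2)] power_Suc mult.commute)
  finally show ?case .
qed

lemma supp_shift:
  assumes "commute A B" "A * x = phi (vv ^ a) * x" "supp_in B x S"
  shows "supp_in (A * B) x ((+) a ` S)"
proof -
  have f: "finite S" using assms(3) by (simp add: supp_in_def)
  have "ev (A * B) (Pp ((+) a ` S)) * x = phi ((vv ^ a) ^ card S) * (ev B (Pp S) * x)"
    using ev_shift[OF assms(1,2)] Pp_shift[OF f] by (simp add: mult.assoc)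
  then show ?thesis using assms(3) f by (simp add: supp_in_def)
qed

lemma supp_prod2:
  assumes "commute A B" "finite SA" "supp_in A x SA" "supp_in B x SB"
  shows "supp_in (A * B) x ((\<lambda>(s,t). s + t) ` (SA \<times> SB))"
  using assms(2,3,4)
proof (induct SA arbitrary: x rule: finite_induct)
  case empty
  then have "x = 0" using supp_empty by blast
  then show ?case using empty by (simp add: supp_in_def)
next
  case (insert a S)
  have fB: "finite SB" using insert by (simp add: supp_in_def)
  obtain q1 q2 where q: "x = ev A q1 * x + ev A q2 * x" and
    s1: "supp_in A (ev A q1 * x) {a}" and s2: "supp_in A (ev A q2 * x) S"
    using supp_split[OF insert(4) insert(2) insert(1)] by blast
  have b1: "supp_in B (ev A q1 * x) SB" using supp_comm[OF insert(5)] assms(1)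
    by (meson commute_ev commute_sym)
  have b2: "supp_in B (ev A q2 * x) SB" using supp_comm[OF insert(5)] assms(1)
    by (meson commute_ev commute_sym)
  have fin: "finite ((\<lambda>(s,t). s + t) ` (insert a S \<times> SB))" using insert fB by simp
  have "supp_in (A * B) (ev A q2 * x) ((\<lambda>(s,t). s + t) ` (S \<times> SB))"
    using insert(3)[OF s2 b2] .
  then have r2: "supp_in (A * B) (ev A q2 * x) ((\<lambda>(s,t). s + t) ` (insert a S \<times> SB))"
    by (rule supp_mono[OF _ fin]) auto
  have "supp_in (A * B) (ev A q1 * x) ((+) a ` SB)"
    using supp_shift[OF assms(1) _ b1] s1 by (simp add: supp_single)
  then have r1: "supp_in (A * B) (ev A q1 * x) ((\<lambda>(s,t). s + t) ` (insert a S \<times> SB))"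
    by (rule supp_mono[OF _ fin]) auto
  show ?case using supp_add[OF r1 r2] q by simp
qed

end

lemma sum_list_upd: "distinct J \<Longrightarrow> j \<in> set J \<Longrightarrow>
   sum_list (map (f(j := Suc (f j))) J) = Suc (sum_list (map (f::'b \<Rightarrow> nat) J))"
proof (induct J)
  case Nil then show ?case by simp
next
  case (Cons m J)
  show ?case
  proof (cases "m = j")
    case True
    then have "j \<notin> set J" using Cons by simp
    then have "sum_list (map (f(j := Suc (f j))) J) = sum_list (map f J)"
      by (intro arg_cong[where f=sum_list] map_cong) auto
    then show ?thesis using True by (simp only: list.map sum_list.Cons fun_upd_same)
  next
    case False then show ?thesis using Cons by simp
  qed
qed

context qalg begin

lemma supp_prod_list:
  assumes "\<forall>m\<in>set J. \<forall>m'\<in>set J. commute (K m) (K m')" "\<forall>m\<in>set J. supp_in (K m) x {a m..b m}"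
  shows "supp_in (prod_list (map K J)) x {sum_list (map a J)..sum_list (map (b::'c \<Rightarrow> nat) J)}"
  using assms
proof (induct J)
  case Nil then show ?case by (simp add: supp_in_def Pp_def)
next
  case (Cons m J)
  have c: "commute (K m) (prod_list (map K J))" using Cons.prems(1)
    by (intro commute_prod_list) auto
  have "supp_in (K m * prod_list (map K J)) x ((\<lambda>(s,t). s + t) ` ({a m..b m} \<times> {sum_list (map a J)..sum_list (map b J)}))"
    using Cons by (intro supp_prod2[OF c]) auto
  then have "supp_in (K m * prod_list (map K J)) x {a m + sum_list (map a J)..b m + sum_list (map b J)}"
    by (rule supp_mono) auto
  then show ?case by simp
qed

lemma eigen:
  assumes comm: "\<forall>m\<in>set J. \<forall>m'\<in>set J. commute (K m) (K m')"
    and dist: "distinct J"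
    and sy: "\<forall>m\<in>set J. supp_in (K m) y {mu m..r}"
    and pr: "prod_list (map K J) = phi (vv ^ r)"
    and sm: "sum_list (map mu J) = r"
    and j: "j \<in> set J"
  shows "K j * y = phi (vv ^ mu j) * y"
proof -
  have le: "mu j \<le> r" using sm j member_le_sum_list[of "mu j" "map mu J"] by auto
  have ins: "{mu j..r} = insert (mu j) {Suc (mu j)..r}" using le by auto
  obtain q1 q2 where q: "y = ev (K j) q1 * y + ev (K j) q2 * y" and
    s1: "supp_in (K j) (ev (K j) q1 * y) {mu j}" and s2: "supp_in (K j) (ev (K j) q2 * y) {Suc (mu j)..r}"
  proof -
    have "supp_in (K j) y (insert (mu j) {Suc (mu j)..r})" using sy j ins by metis
    then show ?thesis using supp_split[of "K j" y "mu j" "{Suc (mu j)..r}"] that by auto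
  qed
  define mu' where "mu' = mu(j := Suc (mu j))"
  have s2': "\<forall>m\<in>set J. supp_in (K m) (ev (K j) q2 * y) {mu' m..r}"
  proof
    fix m assume m: "m \<in> set J"
    show "supp_in (K m) (ev (K j) q2 * y) {mu' m..r}"
    proof (cases "m = j")
      case True then show ?thesis using s2 by (simp add: mu'_def)
    next
      case False
      have "commute (K m) (ev (K j) q2)" using comm m j by (meson commute_ev2 commute_sym)
      then show ?thesis using supp_comm sy m False by (simp add: mu'_def)
    qed
  qed
  have "supp_in (prod_list (map K J)) (ev (K j) q2 * y) {sum_list (map mu' J)..sum_list (map (\<lambda>_. r) J)}"
    by (rule supp_prod_list[OF comm s2'])
  moreover have "sum_list (map mu' J) = Suc r" unfolding mu'_def using sum_list_upd[OF dist j] sm by simp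
  ultimately have "supp_in (phi (vv ^ r)) (ev (K j) q2 * y) {Suc r..sum_list (map (\<lambda>_. r) J)}"
    using pr by simp
  then have "phi (poly (Pp {Suc r..sum_list (map (\<lambda>_. r) J)}) (vv ^ r)) * (ev (K j) q2 * y) = 0"
    by (simp add: supp_in_def ev_phi)
  then have "ev (K j) q2 * y = 0" by (rule phi_kill[rotated]) (simp add: poly_Pp_nz)
  then have "y = ev (K j) q1 * y" using q by simp
  then show ?thesis using s1 by (simp add: supp_single)
qed

end

lemma vv_inv_ne: "vv - inverse vv \<noteq> 0"
proof
  assume "vv - inverse vv = 0"
  then have "vv * vv = 1" by (simp add: field_simps)
  then have "vv ^ 2 = vv ^ 0" by (simp add: power2_eq_square)
  then show False by (simp only: vv_pow_inj)
qed

lemma vv_pow_ne_inv: "m \<noteq> 0 \<Longrightarrow> vv ^ m \<noteq> inverse (vv ^ m)"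
proof
  assume "m \<noteq> 0" "vv ^ m = inverse (vv ^ m)"
  then have "vv ^ m * vv ^ m = 1" by (simp add: field_simps)
  then have "vv ^ (m + m) = vv ^ 0" by (simp add: power_add)
  then show False using \<open>m \<noteq> 0\<close> by (simp only: vv_pow_inj)
qed

definition qn :: "nat \<Rightarrow> qv" where "qn m = (vv ^ m - inverse (vv ^ m)) / (vv - inverse vv)"
definition DD :: "nat \<Rightarrow> nat \<Rightarrow> qv" where
  "DD L s = inverse (vv - inverse vv) * (vv ^ L * inverse (vv ^ (2 * s)) - vv ^ (2 * s) * inverse (vv ^ L))"

lemma qn_0[simp]: "qn 0 = 0" by (simp add: qn_def)
lemma qn_nz: "m \<noteq> 0 \<Longrightarrow> qn m \<noteq> 0"
  using vv_pow_ne_inv vv_inv_ne by (simp add: qn_def)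

lemma qn_step_gen:
  fixes x a b ix ia ib iw :: qv
  assumes "x * ix = 1" "a * ia = 1" "b * ib = 1" "(x - ix) * iw = 1"
  shows "(x * a - ix * ia) * iw * ((b - ib) * iw) - (a - ia) * iw * ((b * x - ib * ix) * iw)
     = iw * (b * a * (ia * ia) - a * a * (ib * ia))"
  using assms by algebra

lemma qn_step: "qn (k + 1) * qn j - qn k * qn (j + 1) = DD (j + k) k"
proof -
  have nz: "vv - inverse vv \<noteq> 0" by (rule vv_inv_ne)
  have e1: "vv * inverse vv = 1" by simp
  have e2: "vv ^ k * inverse (vv ^ k) = 1" by simp
  have e3: "vv ^ j * inverse (vv ^ j) = 1" by simp
  have e4: "(vv - inverse vv) * inverse (vv - inverse vv) = 1" using nz by simp
  have "qn (k + 1) * qn j - qn k * qn (j + 1) =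
     (vv * vv ^ k - inverse vv * inverse (vv ^ k)) * inverse (vv - inverse vv) * ((vv ^ j - inverse (vv ^ j)) * inverse (vv - inverse vv))
     - (vv ^ k - inverse (vv ^ k)) * inverse (vv - inverse vv) * ((vv ^ j * vv - inverse (vv ^ j) * inverse vv) * inverse (vv - inverse vv))"
    unfolding qn_def by (simp add: divide_inverse power_add mult.commute)
  also have "\<dots> = inverse (vv - inverse vv) * (vv ^ j * vv ^ k * (inverse (vv ^ k) * inverse (vv ^ k)) - vv ^ k * vv ^ k * (inverse (vv ^ j) * inverse (vv ^ k)))"
    by (rule qn_step_gen[OF e1 e2 e3 e4])
  also have "\<dots> = DD (j + k) k"
    unfolding DD_def mult_2 power_add by (simp add: ac_simps)
  finally show ?thesis .
qed

lemma sumDD: "k \<le> L + 1 \<Longrightarrow> (\<Sum>s<k. DD L s) = qn k * qn (L + 1 - k)"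
proof (induct k)
  case 0 then show ?case by simp
next
  case (Suc k)
  then have IH: "(\<Sum>s<k. DD L s) = qn k * qn (L + 1 - k)" by simp
  define j where "j = L - k"
  have j: "L = j + k" using Suc.prems unfolding j_def by simp
  have "L + 1 - k = j + 1" using j by simp
  then have "(\<Sum>s<Suc k. DD L s) = qn k * qn (j + 1) + DD (j + k) k" using IH j by simp
  also have "\<dots> = qn (k + 1) * qn j" using qn_step[of k j] by (simp add: algebra_simps)
  finally show ?case using j by simp
qed


abbreviation Ip :: "int poly \<Rightarrow> rat poly" where "Ip \<equiv> map_poly of_int"

lemma Ip_add: "Ip (p + q) = Ip p + Ip q"
  by (rule poly_eqI) (simp add: coeff_map_poly)
lemma Ip_uminus: "Ip (- p) = - Ip p"
  by (rule poly_eqI) (simp add: coeff_map_poly)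
lemma Ip_mult: "Ip (p * q) = Ip p * Ip q"
  by (rule poly_eqI) (simp add: coeff_map_poly coeff_mult)
lemma Ip_X: "Ip [:0, 1:] = [:0, 1:]"
  by (simp add: map_poly_pCons)
lemma Ip_Xpow: "Ip ([:0, 1:] ^ k) = [:0, 1:] ^ k"
  by (induct k) (simp_all add: map_poly_pCons)
lemma Ip_1: "Ip 1 = 1" by simp

lemma X_nz: "([:0, 1:] :: rat poly) ^ k \<noteq> 0" by simp

lemma li_mult: "a \<in> laurent_int \<Longrightarrow> b \<in> laurent_int \<Longrightarrow> a * b \<in> laurent_int"
  unfolding laurent_int_def
proof clarify
  fix p k q l
  show "\<exists>pa ka. Fract (Ip p) ([:0, 1:] ^ k) * Fract (Ip q) ([:0, 1:] ^ l) =
          Fract (Ip pa) ([:0, 1:] ^ ka)"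
    by (rule exI[of _ "p * q"], rule exI[of _ "k + l"]) (simp add: Ip_mult power_add)
qed

lemma li_add: "a \<in> laurent_int \<Longrightarrow> b \<in> laurent_int \<Longrightarrow> a + b \<in> laurent_int"
  unfolding laurent_int_def
proof clarify
  fix p k q l
  show "\<exists>pa ka. Fract (Ip p) ([:0, 1:] ^ k) + Fract (Ip q) ([:0, 1:] ^ l) =
          Fract (Ip pa) ([:0, 1:] ^ ka)"
    by (rule exI[of _ "p * [:0,1:] ^ l + q * [:0,1:] ^ k"], rule exI[of _ "k + l"])
      (simp add: Ip_mult Ip_add Ip_Xpow power_add)
qed

lemma li_uminus: "a \<in> laurent_int \<Longrightarrow> - a \<in> laurent_int"
  unfolding laurent_int_def
proof clarify
  fix p k
  show "\<exists>pa ka. - Fract (Ip p) ([:0, 1:] ^ k) = Fract (Ip pa) ([:0, 1:] ^ ka)"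
    by (rule exI[of _ "- p"], rule exI[of _ k]) (simp add: Ip_uminus)
qed

lemma li_1: "1 \<in> laurent_int"
  unfolding laurent_int_def
  by (rule CollectI, rule exI[of _ 1], rule exI[of _ 0]) (simp add: One_fract_def)

lemma li_vv: "vv \<in> laurent_int"
  unfolding laurent_int_def
  by (rule CollectI, rule exI[of _ "[:0,1:]"], rule exI[of _ 0]) (simp add: vv_def Ip_X)

lemma li_inv_pow: "inverse (vv ^ m) \<in> laurent_int"
  unfolding laurent_int_def
  by (rule CollectI, rule exI[of _ 1], rule exI[of _ m]) (simp add: vv_pow)

lemma li_prod: "(\<And>k. k \<in> A \<Longrightarrow> f k \<in> laurent_int) \<Longrightarrow> prod f A \<in> laurent_int"
proof (induct A rule: infinite_finite_induct)
  case (infinite A) then show ?case by (simp add: li_1)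
next
  case empty then show ?case by (simp add: li_1)
next
  case (insert x F) then show ?case by (simp add: li_mult)
qed

lemma qn_Suc: "qn (Suc m) = vv * qn m + inverse (vv ^ m)"
proof -
  have nz: "vv - inverse vv \<noteq> 0" by (rule vv_inv_ne)
  have nz2: "vv * vv - 1 \<noteq> 0" using nz by (simp add: field_simps)
  show ?thesis unfolding qn_def using nz nz2 by (simp add: field_simps)
qed

lemma li_qn: "qn m \<in> laurent_int"
proof (induct m)
  case 0
  have "(0::qv) = 1 + - 1" by simp
  then show ?case using li_add[OF li_1 li_uminus[OF li_1]] by simp
next
  case (Suc m) then show ?case by (simp add: qn_Suc li_add li_mult li_vv li_inv_pow)
qed


lemma commute_inv: "commute k u \<Longrightarrow> k * ki = 1 \<Longrightarrow> ki * k = 1 \<Longrightarrow> commute ki (u::'a::ring_1)"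
proof -
  assume c: "commute k u" and a: "k * ki = 1" and b: "ki * k = 1"
  have "ki * u = ki * u * (k * ki)" using a by simp
  also have "\<dots> = ki * (u * k) * ki" by (simp add: mult.assoc)
  also have "\<dots> = ki * (k * u) * ki" using c by (simp add: commute_def)
  also have "\<dots> = u * ki" using b by (simp add: mult.assoc[symmetric])
  finally show ?thesis by (simp add: commute_def)
qed

lemma vp_nat[simp]: "vp (int t) = vv ^ t" by (simp add: vp_def)
lemma vp_neg[simp]: "vp (- int t) = inverse (vv ^ t)" by (simp add: vp_def power_int_minus)
lemma vp_1[simp]: "vp 1 = vv" using vp_nat[of 1] by simp
lemma vp_m1[simp]: "vp (-1) = inverse vv" using vp_neg[of 1] by simp

context qalg begin

lemma ev_eigen: assumes h: "k * x = phi c * x" shows "ev k p * x = phi (poly p c) * x"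
proof (induct p)
  case 0 then show ?case by simp
next
  case (pCons a p)
  have "ev k (pCons a p) * x = phi a * x + k * (ev k p * x)" by (simp add: algebra_simps)
  also have "\<dots> = phi a * x + k * (phi (poly p c) * x)" using pCons by simp
  also have "\<dots> = phi a * x + phi (poly p c) * (k * x)" by (simp add: phi_left_commute)
  also have "\<dots> = phi (poly (pCons a p) c) * x" using h by (simp add: algebra_simps; metis mult.assoc phi_comm)
  finally show ?case .
qed

lemma rel_ev: "prod_list (map (\<lambda>j. k - phi (vv ^ j)) [0..<r + 1]) = ev k (Pp {0..r})"
proof -
  have "prod_list (map (\<lambda>j. [:-(vv^j), 1:]) [0..<r + 1]) = (\<Prod>j\<in>set [0..<r + 1]. [:-(vv^j), 1:])"
    by (rule prod.distinct_set_conv_list[symmetric]) simp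
  also have "set [0..<r + 1] = {0..r}" by auto
  finally have "Pp {0..r} = prod_list (map (\<lambda>j. [:-(vv^j), 1:]) [0..<r + 1])"
    unfolding Pp_def by simp
  then have "ev k (Pp {0..r}) = prod_list (map (\<lambda>j. ev k [:-(vv^j), 1:]) [0..<r + 1])"
    by (simp only: ev_prod_list map_map o_def)
  also have "map (\<lambda>j. ev k [:-(vv^j), 1:]) [0..<r + 1] = map (\<lambda>j. k - phi (vv ^ j)) [0..<r + 1]"
    by (rule map_cong[OF refl]) (simp add: algebra_simps)
  finally show ?thesis by (rule sym)
qed

lemma kill_rel:
  assumes "prod_list (map (\<lambda>j. k - phi (vv ^ j)) [0..<r + 1]) = 0" "k * x = phi (inverse vv) * x"
  shows "x = 0"
proof -
  have "phi (poly (Pp {0..r}) (inverse vv)) * x = 0"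
    using assms ev_eigen[OF assms(2), of "Pp {0..r}"] rel_ev by simp
  moreover have "poly (Pp {0..r}) (inverse vv) \<noteq> 0"
  proof
    assume "poly (Pp {0..r}) (inverse vv) = 0"
    then obtain b where "inverse vv = vv ^ b" by (auto simp: poly_Pp)
    then have "vv ^ (b + 1) = vv ^ 0" by (simp add: field_simps)
    then show False by (simp only: vv_pow_inj)
  qed
  ultimately show ?thesis using phi_kill by blast
qed

lemma inv_eigen: "ki * k = 1 \<Longrightarrow> k * y = phi b * y \<Longrightarrow> b \<noteq> 0 \<Longrightarrow> ki * y = phi (inverse b) * y"
proof -
  assume a: "ki * k = 1" "k * y = phi b * y" "b \<noteq> 0"
  have "phi (inverse b) * y = phi (inverse b) * ((ki * k) * y)" using a by simp
  also have "\<dots> = ki * (phi (inverse b) * (k * y))" by (simp add: mult.assoc phi_left_commute)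
  also have "\<dots> = ki * y" using a by (simp add: mult.assoc[symmetric] phi_inv)
  finally show ?thesis by simp
qed

lemma inv_comm_rel:
  assumes "k * ki = 1" "ki * k = 1" "k * X = phi a * X * k" "a * a' = 1"
  shows "ki * X = phi a' * X * ki"
proof -
  have Xk: "X * k = phi a' * (k * X)"
    using assms(3,4) by (simp add: mult.assoc[symmetric] phi_mult[symmetric] mult.commute)
  have "ki * X = ki * X * (k * ki)" using assms(1) by simp
  also have "\<dots> = ki * (X * k) * ki" by (simp add: mult.assoc)
  also have "\<dots> = phi a' * ((ki * k) * X) * ki" by (simp add: Xk mult.assoc phi_left_commute)
  also have "\<dots> = phi a' * X * ki" using assms(2) by simp
  finally show ?thesis .
qed

lemma phi_merge: "phi x * (phi y * z) = phi (x * y) * z"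
  by (simp add: mult.assoc)

lemma weight:
  assumes "U * X = phi a * X * U" "U * y = phi b * y"
  shows "U * (X ^ s * y) = phi (b * a ^ s) * (X ^ s * y)"
proof (induct s)
  case 0 then show ?case using assms(2) by simp
next
  case (Suc s)
  have "U * (X ^ Suc s * y) = (U * X) * (X ^ s * y)" by (simp add: mult.assoc)
  also have "\<dots> = phi a * (X * (U * (X ^ s * y)))" by (simp add: assms(1) mult.assoc)
  also have "\<dots> = phi a * (X * (phi (b * a ^ s) * (X ^ s * y)))" by (simp only: Suc)
  also have "\<dots> = phi a * (phi (b * a ^ s) * (X * (X ^ s * y)))" by (simp only: phi_left_commute[of X])
  also have "\<dots> = phi (a * (b * a ^ s)) * (X * (X ^ s * y))" by (simp only: phi_merge)
  also have "\<dots> = phi (b * a ^ Suc s) * (X ^ Suc s * y)"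
    by (simp only: mult.assoc[symmetric] power_Suc) (simp only: mult_ac)
  finally show ?case .
qed

lemma comm_weight:
  assumes "C = phi w * (A1 * A2 - B1 * B2)" "A1 * x = phi a1 * x" "A2 * x = phi a2 * x"
    "B1 * x = phi b1 * x" "B2 * x = phi b2 * x"
  shows "C * x = phi (w * (a2 * a1 - b2 * b1)) * x"
proof -
  have "C * x = phi w * (A1 * (A2 * x) - B1 * (B2 * x))" unfolding assms(1) by (simp add: mult.assoc left_diff_distrib)
  also have "\<dots> = phi w * (A1 * (phi a2 * x) - B1 * (phi b2 * x))" by (simp only: assms(3,5))
  also have "\<dots> = phi w * (phi a2 * (A1 * x) - phi b2 * (B1 * x))" by (simp only: phi_left_commute[of A1] phi_left_commute[of B1])
  also have "\<dots> = phi w * (phi a2 * (phi a1 * x) - phi b2 * (phi b1 * x))" by (simp only: assms(2,4))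
  also have "\<dots> = phi (w * (a2 * a1 - b2 * b1)) * x"
    by (simp only: phi_merge left_diff_distrib[symmetric] phi_diff[symmetric])
  finally show ?thesis .
qed

lemma comm_weight':
  assumes "C = phi w * (A1 * A2 - B1 * B2)" "A1 * x = phi a1 * x" "A2 * x = phi a2 * x"
    "B1 * x = phi b1 * x" "B2 * x = phi b2 * x" "w * (a2 * a1 - b2 * b1) = t"
  shows "C * x = phi t * x"
  using comm_weight[OF assms(1-5)] assms(6) by simp

lemma sl2_step:
  assumes Yy: "Y * y = 0" and d: "\<And>s. (Y * X - X * Y) * (X ^ s * y) = phi (d s) * (X ^ s * y)"
  shows "Y * (X ^ Suc k * y) = phi (\<Sum>s<Suc k. d s) * (X ^ k * y)"
proof (induct k)
  case 0
  have "Y * (X ^ Suc 0 * y) = (Y * X - X * Y) * (X ^ 0 * y) + X * (Y * y)" by (simp add: algebra_simps)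
  then show ?case using d[of 0] Yy by simp
next
  case (Suc k)
  have "Y * (X ^ Suc (Suc k) * y) = (Y * X - X * Y) * (X ^ Suc k * y) + X * (Y * (X ^ Suc k * y))"
    by (simp add: algebra_simps)
  also have "\<dots> = phi (d (Suc k)) * (X ^ Suc k * y) + X * (phi (\<Sum>s<Suc k. d s) * (X ^ k * y))"
    by (simp only: d Suc)
  also have "\<dots> = phi (d (Suc k)) * (X ^ Suc k * y) + phi (\<Sum>s<Suc k. d s) * (X ^ Suc k * y)"
    by (simp only: phi_left_commute[of X] power_Suc mult.assoc)
  also have "\<dots> = phi (\<Sum>s<Suc (Suc k). d s) * (X ^ Suc k * y)"
    by (simp add: algebra_simps)
  finally show ?case .
qed

lemma sl2_pow:
  assumes Yy: "Y * y = 0" and d: "\<And>s. (Y * X - X * Y) * (X ^ s * y) = phi (d s) * (X ^ s * y)"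
  shows "Y ^ c * (X ^ c * y) = phi (\<Prod>k\<in>{1..c}. \<Sum>s<k. d s) * y"
proof (induct c)
  case 0 then show ?case by simp
next
  case (Suc c)
  have "Y ^ Suc c * (X ^ Suc c * y) = Y ^ c * (Y * (X ^ Suc c * y))" by (simp only: power_Suc2 mult.assoc)
  also have "\<dots> = Y ^ c * (phi (\<Sum>s<Suc c. d s) * (X ^ c * y))"
    by (simp only: sl2_step[OF Yy d])
  also have "\<dots> = phi (\<Sum>s<Suc c. d s) * (Y ^ c * (X ^ c * y))"
    by (simp only: phi_left_commute[of "Y ^ c"])
  also have "\<dots> = phi (\<Sum>s<Suc c. d s) * (phi (\<Prod>k\<in>{1..c}. \<Sum>s<k. d s) * y)"
    by (simp only: Suc)
  also have "\<dots> = phi (\<Prod>k\<in>{1..Suc c}. \<Sum>s<k. d s) * y"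
    by (simp only: phi_merge) (simp add: atLeastAtMostSuc_conv mult.commute)
  finally show ?case .
qed

lemma block:
  assumes Yy: "Y * y = 0" and d: "\<And>s. (Y * X - X * Y) * (X ^ s * y) = phi (DD L s) * (X ^ s * y)"
  shows "\<exists>z\<in>laurent_int. z \<noteq> 0 \<and> (L \<ge> c \<longrightarrow> Y ^ c * X ^ c * y = phi z * y) \<and>
     (L < c \<longrightarrow> Y ^ c * X ^ c * y = 0) \<and> (c = 1 \<and> L = 1 \<longrightarrow> z = 1)"
proof -
  define z where "z = (\<Prod>k\<in>{1..c}. \<Sum>s<k. DD L s)"
  have eq: "Y ^ c * X ^ c * y = phi z * y" unfolding z_def using sl2_pow[OF Yy d] by (simp add: mult.assoc)
  show ?thesis
  proof (cases "L \<ge> c")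
    case True
    have zq: "z = (\<Prod>k\<in>{1..c}. qn k * qn (L + 1 - k))"
      unfolding z_def using True by (intro prod.cong refl sumDD) auto
    have "z \<noteq> 0" unfolding zq using True by (auto simp: qn_nz)
    moreover have "z \<in> laurent_int" unfolding zq by (intro li_prod li_mult li_qn)
    moreover have "c = 1 \<and> L = 1 \<longrightarrow> z = 1"
      using vv_inv_ne by (auto simp: z_def DD_def)
    ultimately show ?thesis using eq True by auto
  next
    case False
    have "(\<Sum>s<Suc L. DD L s) = 0" using sumDD[of "Suc L" L] by simp
    then have "z = 0" unfolding z_def using False by (intro prod_zero finite_atLeastAtMost bexI[of _ "Suc L"]) auto
    then show ?thesis using eq False li_1 by (intro bexI[of _ 1]) auto
  qed
qed

end

definition gg :: "nat \<Rightarrow> qv poly" where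
  "gg t = smult (inverse (vp (int (Suc t)) - vp (- int (Suc t)))) [:-(vv^t), 0, inverse (vv^t):]"

lemma gg_dvd: "[:-(vv^t), 1:] dvd gg t"
  by (subst poly_eq_0_iff_dvd[symmetric]) (simp add: gg_def)

lemma Pp_dvd_G: "Pp {0..<l} dvd prod_list (map gg [0..<l])"
proof (induct l)
  case 0 then show ?case by (simp add: Pp_def)
next
  case (Suc l)
  have "Pp {0..<Suc l} = Pp {0..<l} * [:-(vv^l), 1:]"
    by (simp add: Pp_def atLeast0_lessThan_Suc mult.commute)
  moreover have "prod_list (map gg [0..<Suc l]) = prod_list (map gg [0..<l]) * gg l" by simp
  ultimately show ?case using mult_dvd_mono[OF Suc gg_dvd[of l]] by simp
qed

context qalg begin

lemma factor_eq:
  assumes "ki * k = 1"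
  shows "(k * phi ia - ki * phi a) * phi c = ki * ev k (smult c [:-a, 0, ia:])"
proof -
  have e: "ev k [:-a, 0, ia:] = - phi a + k * (k * phi ia)" by simp
  have "ki * ev k (smult c [:-a, 0, ia:]) = ki * (phi c * (- phi a + k * (k * phi ia)))" by (simp only: ev_smult e)
  also have "\<dots> = phi c * (ki * (- phi a + k * (k * phi ia)))" by (simp only: phi_left_commute[of ki])
  also have "\<dots> = phi c * (- (ki * phi a) + (ki * k) * (k * phi ia))" by (simp only: distrib_left mult_minus_right mult.assoc)
  also have "\<dots> = phi c * (k * phi ia - ki * phi a)" using assms by simp
  also have "\<dots> = (k * phi ia - ki * phi a) * phi c" by (rule phi_central)
  finally show ?thesis by simp
qed

lemma Bl_eq_gen:
  assumes kk: "k * ki = 1" "ki * k = 1" and Fs: "\<And>t. Fs (Suc t) = ki * ev k (gg t)"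
  shows "prod_list (map Fs [1..<l + 1]) = ki ^ l * ev k (prod_list (map gg [0..<l]))"
proof (induct l)
  case 0 then show ?case by simp
next
  case (Suc l)
  have ck: "commute (ev k (prod_list (map gg [0..<l]))) ki"
    using kk by (intro commute_ev) (simp add: commute_def)
  have "[1..<Suc l + 1] = [1..<l + 1] @ [Suc l]" by simp
  then have "prod_list (map Fs [1..<Suc l + 1]) = prod_list (map Fs [1..<l + 1]) * Fs (Suc l)"
    by simp
  also have "\<dots> = ki ^ l * ev k (prod_list (map gg [0..<l])) * (ki * ev k (gg l))"
    by (simp only: Suc Fs)
  also have "\<dots> = ki ^ l * (ev k (prod_list (map gg [0..<l])) * ki) * ev k (gg l)" by (simp only: mult.assoc)
  also have "\<dots> = ki ^ l * (ki * ev k (prod_list (map gg [0..<l]))) * ev k (gg l)"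
    by (simp only: ck[unfolded commute_def])
  also have "prod_list (map gg [0..<Suc l]) = prod_list (map gg [0..<l]) * gg l" by simp
  then have "ki ^ l * (ki * ev k (prod_list (map gg [0..<l]))) * ev k (gg l) = ki ^ Suc l * ev k (prod_list (map gg [0..<Suc l]))"
    by (simp only: ev_mult power_Suc2 mult.assoc)
  finally show ?case .
qed

lemma Bl_eq:
  assumes kk: "k * ki = 1" "ki * k = 1"
  shows "prod_list (map (\<lambda>s. (k * phi (vp (- int s + 1)) - ki * phi (vp (int s - 1))) *
            phi (inverse (vp (int s) - vp (- int s)))) [1..<l + 1]) = ki ^ l * ev k (prod_list (map gg [0..<l]))"
proof (rule Bl_eq_gen[OF kk])
  fix t
  have e: "- int (Suc t) + 1 = - int t" "int (Suc t) - 1 = int t" by simp_all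
  show "(k * phi (vp (- int (Suc t) + 1)) - ki * phi (vp (int (Suc t) - 1))) *
            phi (inverse (vp (int (Suc t)) - vp (- int (Suc t)))) = ki * ev k (gg t)"
    unfolding gg_def e vp_nat vp_neg by (rule factor_eq[OF kk(2)])
qed

lemma Bl_supp:
  assumes kk: "k * ki = 1" "ki * k = 1"
    and rel: "prod_list (map (\<lambda>j. k - phi (vv ^ j)) [0..<r + 1]) = 0"
  shows "prod_list (map (\<lambda>s. (k * phi (vp (- int s + 1)) - ki * phi (vp (int s - 1))) *
            phi (inverse (vp (int s) - vp (- int s)))) [1..<l + 1]) * ev k (Pp {l..r}) = 0"
proof -
  obtain W where W: "prod_list (map gg [0..<l]) = Pp {0..<l} * W" using Pp_dvd_G by (metis dvdE)
  define U where "U = {0..<l} \<union> {l..r}"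
  have "Pp {0..<l} * Pp {l..r} = Pp U" unfolding U_def Pp_def
    by (rule prod.union_disjoint[symmetric]) auto
  also have "Pp U = Pp (U - {0..r}) * Pp {0..r}" by (rule Pp_subset) (auto simp: U_def)
  finally have "prod_list (map gg [0..<l]) * Pp {l..r} = (W * Pp (U - {0..r})) * Pp {0..r}"
    using W by (simp add: ac_simps)
  then have "ev k (prod_list (map gg [0..<l])) * ev k (Pp {l..r}) = 0"
    using rel rel_ev by (metis ev_mult mult_zero_right)
  then show ?thesis using Bl_eq[OF kk] by (simp add: mult.assoc)
qed

end

lemma DD_i: "- inverse (vv - inverse vv) * (inverse (vv ^ L) * vv ^ s * (vv ^ 0 * vv ^ s) - vv ^ L * inverse vv ^ s * (inverse (vv ^ 0) * inverse vv ^ s)) = DD L s"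
  unfolding DD_def mult_2 power_add by (simp add: power_inverse algebra_simps)

lemma DD_ii: "inverse (vv - inverse vv) * (inverse (vv ^ 0) * inverse vv ^ s * (vv ^ L * inverse vv ^ s) - vv ^ 0 * vv ^ s * (inverse (vv ^ L) * vv ^ s)) = DD L s"
  unfolding DD_def mult_2 power_add by (simp add: power_inverse algebra_simps)

theorem lemma2p2p7:
  fixes phi :: "qv \<Rightarrow> 'a::ring_1" and E F K Ki :: "int \<Rightarrow> 'a"
    and n r c :: nat and lam :: "int \<Rightarrow> nat" and i :: int
  assumes "r \<ge> 3" and "n > r" and "c \<ge> 1"
    and "lam \<in> Lambda n r" and "i \<in> {1..int n}"
    and "T_rel n r phi E F K Ki"
  shows "(lam i = 0 \<longrightarrow>
           (\<exists>z\<in>laurent_int. z \<noteq> 0 \<and>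
              (lam (i + 1) \<ge> c \<longrightarrow> F i ^ c * E i ^ c * one_lam n phi K Ki lam = phi z * one_lam n phi K Ki lam) \<and>
              (lam (i + 1) < c \<longrightarrow> F i ^ c * E i ^ c * one_lam n phi K Ki lam = 0) \<and>
              (c = 1 \<and> lam (i + 1) = 1 \<longrightarrow> z = 1)))
       \<and> (lam (i + 1) = 0 \<longrightarrow>
           (\<exists>z'\<in>laurent_int. z' \<noteq> 0 \<and>
              (lam i \<ge> c \<longrightarrow> E i ^ c * F i ^ c * one_lam n phi K Ki lam = phi z' * one_lam n phi K Ki lam) \<and>
              (lam i < c \<longrightarrow> E i ^ c * F i ^ c * one_lam n phi K Ki lam = 0) \<and>
              (c = 1 \<and> lam i = 1 \<longrightarrow> z' = 1)))"
proof -
  note R = assms(6)[unfolded T_rel_def]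
  interpret qalg phi by unfold_locales (rule R[THEN conjunct1])
  note pe = R[THEN conjunct2, THEN conjunct1]
  note rel = R[THEN conjunct2, THEN conjunct2, THEN conjunct1]
  note pr = R[THEN conjunct2, THEN conjunct2, THEN conjunct2, THEN conjunct1]
  note rp = R[THEN conjunct2, THEN conjunct2, THEN conjunct2, THEN conjunct2]
  define I where "I = {1..int n}"
  have n4: "n \<ge> 4" using assms(1,2) by simp
  have KK: "\<And>a b. a \<in> I \<Longrightarrow> b \<in> I \<Longrightarrow> K a * K b = K b * K a" using rel unfolding I_def by blast
  have KKi: "\<And>a. a \<in> I \<Longrightarrow> K a * Ki a = 1" using rel unfolding I_def by blast
  have KiK: "\<And>a. a \<in> I \<Longrightarrow> Ki a * K a = 1" using rel unfolding I_def by blast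
  have KE: "\<And>a b. a \<in> I \<Longrightarrow> b \<in> I \<Longrightarrow> K a * E b = phi (vp (eps_plus n a b)) * E b * K a"
    using rel unfolding I_def by blast
  have KF: "\<And>a b. a \<in> I \<Longrightarrow> b \<in> I \<Longrightarrow> K a * F b = phi (vp (- eps_plus n a b)) * F b * K a"
    using rel unfolding I_def by blast
  have EF0: "\<And>a. a \<in> I \<Longrightarrow> E a * F a - F a * E a = (if a = a then phi (inverse (vv - inverse vv)) *
           (K a * Ki (a + 1) - Ki a * K (a + 1)) else 0)"
    using rel unfolding I_def by blast
  have rpI: "\<And>a. a \<in> I \<Longrightarrow> prod_list (map (\<lambda>j. K a - phi (vv ^ j)) [0..<r + 1]) = 0"
    using rp unfolding I_def by blast
  have lamp: "\<And>x. lam (x + int n) = lam x" and lams: "(\<Sum>x\<in>{1..int n}. lam x) = r"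
    using assms(4) by (auto simp: Lambda_def)
  have iI: "i \<in> I" using assms(5) by (simp add: I_def)
  define i' where "i' = per n (i + 1)"
  have i'_eq: "i' = (if i < int n then i + 1 else 1)"
    using iI n4 by (auto simp: i'_def per_def I_def)
  have i'I: "i' \<in> I" using i'_eq iI n4 by (auto simp: I_def)
  have Ki1: "K (i + 1) = K i'" "Ki (i + 1) = Ki i'" using pe unfolding i'_def by metis+
  have lam_i': "lam i' = lam (i + 1)"
  proof (cases "i < int n")
    case True then show ?thesis using i'_eq by simp
  next
    case False
    then have "i = int n" using iI by (simp add: I_def)
    then show ?thesis using i'_eq lamp[of 1] False by (simp add: add.commute)
  qed
  have per_I: "\<And>x. x \<in> I \<Longrightarrow> per n x = x" by (auto simp: per_def I_def)
  have eps_ii: "eps_plus n i i = 1" by (simp add: eps_plus_def)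
  have eps_i'i: "eps_plus n i' i = -1"
  proof -
    have "per n i \<noteq> per n i'" using per_I[OF iI] per_I[OF i'I] i'_eq iI n4 by (auto simp: I_def)
    moreover have "per n i = per n (i' - 1)"
    proof (cases "i < int n")
      case True then show ?thesis using i'_eq by simp
    next
      case False
      then have "i = int n" using iI by (simp add: I_def)
      then show ?thesis using i'_eq False n4 by (simp add: per_def zmod_minus1)
    qed
    ultimately show ?thesis by (simp add: eps_plus_def)
  qed
  have EF: "E i * F i - F i * E i = phi (inverse (vv - inverse vv)) * (K i * Ki i' - Ki i * K i')"
    using EF0[OF iI] Ki1 by simp

  define Bf where "Bf = (\<lambda>m. prod_list (map (\<lambda>s. (K m * phi (vp (- int s + 1)) - Ki m * phi (vp (int s - 1))) *
        phi (inverse (vp (int s) - vp (- int s)))) [1..<lam m + 1]))"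
  define y where "y = one_lam n phi K Ki lam"
  have yB: "y = prod_list (map Bf [1..int n])" unfolding y_def one_lam_def Bf_def by simp
  have cKK: "\<And>a b. a \<in> I \<Longrightarrow> b \<in> I \<Longrightarrow> commute (K a) (K b)" using KK by (simp add: commute_def)
  have cKKi: "\<And>a b. a \<in> I \<Longrightarrow> b \<in> I \<Longrightarrow> commute (K a) (Ki b)"
    using cKK KKi KiK commute_inv commute_sym by metis
  have cKB: "\<And>a b. a \<in> I \<Longrightarrow> b \<in> I \<Longrightarrow> commute (K a) (Bf b)"
    unfolding Bf_def by (auto intro!: commute_prod_list commute_mult commute_diff cKK cKKi)
  have sy: "\<forall>m\<in>set [1..int n]. supp_in (K m) y {lam m..r}"
  proof
    fix m assume "m \<in> set [1..int n]"
    then have mI: "m \<in> I" by (simp add: I_def)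
    define X where "X = ev (K m) (Pp {lam m..r})"
    have BX: "Bf m * X = 0" unfolding X_def Bf_def by (rule Bl_supp[OF KKi[OF mI] KiK[OF mI] rpI[OF mI]])
    have cX: "\<And>b. b \<in> I \<Longrightarrow> commute X (Bf b)" unfolding X_def using cKB[OF mI] by blast
    have "y * X = 0" unfolding yB
      by (rule prod_list_zero_right[of _ X "Bf m"]) (use cX BX mI in \<open>auto simp: I_def\<close>)
    moreover have "commute X y" unfolding yB using cX by (auto simp: I_def intro!: commute_prod_list)
    ultimately have "X * y = 0" by (simp add: commute_def)
    then show "supp_in (K m) y {lam m..r}" unfolding X_def supp_in_def by simp
  qed
  have eig: "\<And>j. j \<in> I \<Longrightarrow> K j * y = phi (vv ^ lam j) * y"
  proof -
    fix j assume jI: "j \<in> I"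
    have "sum_list (map lam [1..int n]) = r"
      using lams by (simp add: sum_list_distinct_conv_sum_set)
    then show "K j * y = phi (vv ^ lam j) * y"
      using eigen[of "[1..int n]" K y lam r j] cKK sy pr jI by (simp add: I_def)
  qed
  have eigi: "\<And>j. j \<in> I \<Longrightarrow> Ki j * y = phi (inverse (vv ^ lam j)) * y"
  proof -
    fix j assume jI: "j \<in> I"
    show "Ki j * y = phi (inverse (vv ^ lam j)) * y" by (rule inv_eigen[OF KiK[OF jI] eig[OF jI]]) simp
  qed

  have part1: "lam i = 0 \<longrightarrow>
           (\<exists>z\<in>laurent_int. z \<noteq> 0 \<and>
              (lam (i + 1) \<ge> c \<longrightarrow> F i ^ c * E i ^ c * y = phi z * y) \<and>
              (lam (i + 1) < c \<longrightarrow> F i ^ c * E i ^ c * y = 0) \<and>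
              (c = 1 \<and> lam (i + 1) = 1 \<longrightarrow> z = 1))"
  proof
    assume l0: "lam i = 0"
    define L where "L = lam (i + 1)"
    have Ky: "K i * y = phi (vv ^ 0) * y" using eig[OF iI] l0 by simp
    have Ky': "K i' * y = phi (vv ^ L) * y" using eig[OF i'I] lam_i' by (simp add: L_def)
    have Kiy: "Ki i * y = phi (inverse (vv ^ 0)) * y" using eigi[OF iI] l0 by simp
    have Kiy': "Ki i' * y = phi (inverse (vv ^ L)) * y" using eigi[OF i'I] lam_i' by (simp add: L_def)
    have KiE: "K i * E i = phi vv * E i * K i" using KE[OF iI iI] eps_ii by simp
    have Ki'E: "K i' * E i = phi (inverse vv) * E i * K i'" using KE[OF i'I iI] eps_i'i by simp
    have KiF: "K i * F i = phi (inverse vv) * F i * K i" using KF[OF iI iI] eps_ii by simp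
    have Fy: "F i * y = 0"
    proof (rule kill_rel[OF rpI[OF iI]])
      show "K i * (F i * y) = phi (inverse vv) * (F i * y)"
        using KiF Ky by (simp add: mult.assoc[symmetric]) (simp add: mult.assoc)
    qed
    have W1: "\<And>s. K i * (E i ^ s * y) = phi (vv ^ 0 * vv ^ s) * (E i ^ s * y)" by (rule weight[OF KiE Ky])
    have W2: "\<And>s. Ki i' * (E i ^ s * y) = phi (inverse (vv ^ L) * vv ^ s) * (E i ^ s * y)"
      by (rule weight[OF inv_comm_rel[OF KKi[OF i'I] KiK[OF i'I] Ki'E] Kiy']) simp
    have W3: "\<And>s. Ki i * (E i ^ s * y) = phi (inverse (vv ^ 0) * inverse vv ^ s) * (E i ^ s * y)"
      by (rule weight[OF inv_comm_rel[OF KKi[OF iI] KiK[OF iI] KiE] Kiy]) simp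
    have W4: "\<And>s. K i' * (E i ^ s * y) = phi (vv ^ L * inverse vv ^ s) * (E i ^ s * y)"
      by (rule weight[OF Ki'E Ky'])
    have C: "F i * E i - E i * F i = phi (- inverse (vv - inverse vv)) * (K i * Ki i' - Ki i * K i')"
      using EF by (metis minus_diff_eq minus_mult_left phi_uminus)
    have d: "\<And>s. (F i * E i - E i * F i) * (E i ^ s * y) = phi (DD L s) * (E i ^ s * y)"
      by (rule comm_weight'[OF C W1 W2 W3 W4]) (rule DD_i)
    show "\<exists>z\<in>laurent_int. z \<noteq> 0 \<and>
              (lam (i + 1) \<ge> c \<longrightarrow> F i ^ c * E i ^ c * y = phi z * y) \<and>
              (lam (i + 1) < c \<longrightarrow> F i ^ c * E i ^ c * y = 0) \<and>
              (c = 1 \<and> lam (i + 1) = 1 \<longrightarrow> z = 1)"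
      using block[OF Fy d, of c] unfolding L_def .
  qed

  have part2: "lam (i + 1) = 0 \<longrightarrow>
           (\<exists>z'\<in>laurent_int. z' \<noteq> 0 \<and>
              (lam i \<ge> c \<longrightarrow> E i ^ c * F i ^ c * y = phi z' * y) \<and>
              (lam i < c \<longrightarrow> E i ^ c * F i ^ c * y = 0) \<and>
              (c = 1 \<and> lam i = 1 \<longrightarrow> z' = 1))"
  proof
    assume l0: "lam (i + 1) = 0"
    define L where "L = lam i"
    have Ky: "K i * y = phi (vv ^ L) * y" using eig[OF iI] by (simp add: L_def)
    have Ky': "K i' * y = phi (vv ^ 0) * y" using eig[OF i'I] lam_i' l0 by simp
    have Kiy: "Ki i * y = phi (inverse (vv ^ L)) * y" using eigi[OF iI] by (simp add: L_def)
    have Kiy': "Ki i' * y = phi (inverse (vv ^ 0)) * y" using eigi[OF i'I] lam_i' l0 by simp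
    have KiF: "K i * F i = phi (inverse vv) * F i * K i" using KF[OF iI iI] eps_ii by simp
    have Ki'F: "K i' * F i = phi vv * F i * K i'" using KF[OF i'I iI] eps_i'i by simp
    have Ki'E: "K i' * E i = phi (inverse vv) * E i * K i'" using KE[OF i'I iI] eps_i'i by simp
    have Ey: "E i * y = 0"
    proof (rule kill_rel[OF rpI[OF i'I]])
      show "K i' * (E i * y) = phi (inverse vv) * (E i * y)"
        using Ki'E Ky' by (simp add: mult.assoc[symmetric]) (simp add: mult.assoc)
    qed
    have W1: "\<And>s. K i * (F i ^ s * y) = phi (vv ^ L * inverse vv ^ s) * (F i ^ s * y)" by (rule weight[OF KiF Ky])
    have W2: "\<And>s. Ki i' * (F i ^ s * y) = phi (inverse (vv ^ 0) * inverse vv ^ s) * (F i ^ s * y)"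
      by (rule weight[OF inv_comm_rel[OF KKi[OF i'I] KiK[OF i'I] Ki'F] Kiy']) simp
    have W3: "\<And>s. Ki i * (F i ^ s * y) = phi (inverse (vv ^ L) * vv ^ s) * (F i ^ s * y)"
      by (rule weight[OF inv_comm_rel[OF KKi[OF iI] KiK[OF iI] KiF] Kiy]) simp
    have W4: "\<And>s. K i' * (F i ^ s * y) = phi (vv ^ 0 * vv ^ s) * (F i ^ s * y)"
      by (rule weight[OF Ki'F Ky'])
    have d: "\<And>s. (E i * F i - F i * E i) * (F i ^ s * y) = phi (DD L s) * (F i ^ s * y)"
      by (rule comm_weight'[OF EF W1 W2 W3 W4]) (rule DD_ii)
    show "\<exists>z'\<in>laurent_int. z' \<noteq> 0 \<and>
              (lam i \<ge> c \<longrightarrow> E i ^ c * F i ^ c * y = phi z' * y) \<and>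
              (lam i < c \<longrightarrow> E i ^ c * F i ^ c * y = 0) \<and>
              (c = 1 \<and> lam i = 1 \<longrightarrow> z' = 1)"
      using block[OF Ey d, of c] unfolding L_def .
  qed
  show ?thesis using part1 part2 unfolding y_def by (rule conjI)
qed


end
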